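(* If $T$ is a tree, then $\gamma_{\rm i}(T)=\alpha(T)$.
   Context: $\alpha(T)$ is the independence number. Indicated domination game on a graph $G$: two players, Dominator and Staller, alternate. In each round Dominator indicates a vertex $v$ not yet dominated by the vertices previously selected by Staller (a vertex dominates itself and its neighbors), and Staller must select a vertex of the closed neighborhood $N[v]$, adding it to a set $D$. The game ends when $D$ is a dominating set of $G$. Dominator wants to minimize $|D|$ and Staller to maximize it; the size of $D$ under optimal play of both is the indicated domination number $\gamma_{\rm i}(G)$. *)

theory Defs
  imports Main
begin

definition graph :: "'a set \<Rightarrow> ('a \<Rightarrow> 'a \<Rightarrow> bool) \<Rightarrow> bool" where
  "graph V E \<longleftrightarrow> finite V \<and> (\<forall>x y. E x y \<longrightarrow> x \<in> V \<and> y \<in> V) \<and>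
     (\<forall>x y. E x y \<longrightarrow> E y x) \<and> (\<forall>x. \<not> E x x)"

definition connected_graph :: "'a set \<Rightarrow> ('a \<Rightarrow> 'a \<Rightarrow> bool) \<Rightarrow> bool" where
  "connected_graph V E \<longleftrightarrow> (\<forall>x\<in>V. \<forall>y\<in>V. E\<^sup>*\<^sup>* x y)"

definition is_cycle :: "('a \<Rightarrow> 'a \<Rightarrow> bool) \<Rightarrow> 'a list \<Rightarrow> bool" where
  "is_cycle E xs \<longleftrightarrow> length xs \<ge> 3 \<and> distinct xs \<and>
     (\<forall>i. Suc i < length xs \<longrightarrow> E (xs ! i) (xs ! Suc i)) \<and> E (last xs) (hd xs)"

definition tree :: "'a set \<Rightarrow> ('a \<Rightarrow> 'a \<Rightarrow> bool) \<Rightarrow> bool" where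
  "tree V E \<longleftrightarrow> graph V E \<and> V \<noteq> {} \<and> connected_graph V E \<and> (\<nexists>xs. is_cycle E xs)"

definition closed_nbhd :: "'a set \<Rightarrow> ('a \<Rightarrow> 'a \<Rightarrow> bool) \<Rightarrow> 'a \<Rightarrow> 'a set" where
  "closed_nbhd V E v = {u \<in> V. u = v \<or> E v u}"

definition dominated :: "'a set \<Rightarrow> ('a \<Rightarrow> 'a \<Rightarrow> bool) \<Rightarrow> 'a set \<Rightarrow> 'a \<Rightarrow> bool" where
  "dominated V E D v \<longleftrightarrow> (\<exists>u\<in>D. v \<in> closed_nbhd V E u)"

definition dominating_set :: "'a set \<Rightarrow> ('a \<Rightarrow> 'a \<Rightarrow> bool) \<Rightarrow> 'a set \<Rightarrow> bool" where
  "dominating_set V E D \<longleftrightarrow> D \<subseteq> V \<and> (\<forall>v\<in>V. dominated V E D v)"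

definition independent_set :: "'a set \<Rightarrow> ('a \<Rightarrow> 'a \<Rightarrow> bool) \<Rightarrow> 'a set \<Rightarrow> bool" where
  "independent_set V E S \<longleftrightarrow> S \<subseteq> V \<and> (\<forall>x\<in>S. \<forall>y\<in>S. \<not> E x y)"

definition independence_number :: "'a set \<Rightarrow> ('a \<Rightarrow> 'a \<Rightarrow> bool) \<Rightarrow> nat" where
  "independence_number V E = Max {card S | S. independent_set V E S}"

text \<open>Value of the indicated domination game from position D (the set of vertices
selected so far by Staller): the number of further moves under optimal play.
Dominator indicates an undominated vertex v (minimizing), Staller picks
u in N[v] (maximizing); each move adds a new vertex to D, so the fuel n
(number of moves still allowed) is sufficient once n >= |V|.\<close>

fun ind_game_val :: "'a set \<Rightarrow> ('a \<Rightarrow> 'a \<Rightarrow> bool) \<Rightarrow> nat \<Rightarrow> 'a set \<Rightarrow> nat" where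
  "ind_game_val V E 0 D = 0"
| "ind_game_val V E (Suc n) D =
     (if dominating_set V E D then 0
      else Min ((\<lambda>v. Max ((\<lambda>u. Suc (ind_game_val V E n (insert u D))) ` closed_nbhd V E v))
                 ` {v \<in> V. \<not> dominated V E D v}))"

definition indicated_domination_number :: "'a set \<Rightarrow> ('a \<Rightarrow> 'a \<Rightarrow> bool) \<Rightarrow> nat" where
  "indicated_domination_number V E = ind_game_val V E (card V) {}"

end

theory Submission
  imports Defs
begin

definition undom :: "'a set \<Rightarrow> ('a \<Rightarrow> 'a \<Rightarrow> bool) \<Rightarrow> 'a set \<Rightarrow> 'a set" where
  "undom V E D = {v \<in> V. \<not> dominated V E D v}"

definition alphaU :: "'a set \<Rightarrow> ('a \<Rightarrow> 'a \<Rightarrow> bool) \<Rightarrow> 'a set \<Rightarrow> nat" where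
  "alphaU V E W = Max {card S | S. S \<subseteq> W \<and> independent_set V E S}"

lemma dominated_insert:
  "dominated V E (insert u D) x \<longleftrightarrow> dominated V E D x \<or> (x \<in> V \<and> (x = u \<or> E u x))"
  unfolding dominated_def closed_nbhd_def by auto

lemma dominated_empty: "\<not> dominated V E {} x"
  unfolding dominated_def by auto

lemma undom_insert_sub: "undom V E (insert u D) \<subseteq> undom V E D"
  unfolding undom_def by (auto simp: dominated_insert)

lemma closed_nbhd_iff: "u \<in> closed_nbhd V E v \<longleftrightarrow> u \<in> V \<and> (u = v \<or> E v u)"
  unfolding closed_nbhd_def by auto

lemma alphaU_finite:
  assumes "finite V"
  shows "finite {card S | S. S \<subseteq> W \<and> independent_set V E S}"
proof -
  have "{card S | S. S \<subseteq> W \<and> independent_set V E S} \<subseteq> {..card V}"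
    using assms by (auto simp: independent_set_def intro: card_mono)
  then show ?thesis using finite_subset by blast
qed

lemma alphaU_ge:
  assumes "finite V" "S \<subseteq> W" "independent_set V E S"
  shows "card S \<le> alphaU V E W"
  unfolding alphaU_def using assms alphaU_finite[OF assms(1)] by (intro Max_ge) auto

lemma alphaU_attained:
  assumes "finite V"
  shows "\<exists>S. S \<subseteq> W \<and> independent_set V E S \<and> card S = alphaU V E W"
proof -
  let ?A = "{card S | S. S \<subseteq> W \<and> independent_set V E S}"
  have "independent_set V E {}" by (simp add: independent_set_def)
  hence "card {} \<in> ?A" by (intro CollectI exI[of _ "{}"]) simp
  hence "0 \<in> ?A" by simp
  hence "?A \<noteq> {}" by blast
  from Max_in[OF alphaU_finite[OF assms] this] obtain S where
    "Max ?A = card S" "S \<subseteq> W" "independent_set V E S" by blast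
  then show ?thesis unfolding alphaU_def by (intro exI[of _ S]) simp
qed

lemma alphaU_empty:
  assumes "finite V"
  shows "alphaU V E {} = 0"
  using alphaU_attained[OF assms, of "{}" E] by auto

lemma lower:
  assumes g: "graph V E"
  shows "D \<subseteq> V \<Longrightarrow> card (undom V E D) \<le> n \<Longrightarrow> alphaU V E (undom V E D) \<le> ind_game_val V E n D"
proof (induction n arbitrary: D)
  case 0
  have fin: "finite V" using g by (simp add: graph_def)
  have "finite (undom V E D)" using fin unfolding undom_def by auto
  hence "undom V E D = {}" using 0 by auto
  then show ?case using alphaU_empty[OF fin] by simp
next
  case (Suc n)
  have fin: "finite V" using g by (simp add: graph_def)
  have sym: "\<And>x y. E x y \<Longrightarrow> E y x" and irr: "\<And>x. \<not> E x x"
    and inV: "\<And>x y. E x y \<Longrightarrow> x \<in> V \<and> y \<in> V" using g by (auto simp: graph_def)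
  show ?case
  proof (cases "dominating_set V E D")
    case True
    then have "undom V E D = {}" unfolding undom_def dominating_set_def by auto
    then have "alphaU V E (undom V E D) = 0" using alphaU_empty[OF fin] by simp
    then show ?thesis by (metis le0)
  next
    case False
    let ?W = "undom V E D"
    let ?f = "\<lambda>v. Max ((\<lambda>u. Suc (ind_game_val V E n (insert u D))) ` closed_nbhd V E v)"
    have Wne: "?W \<noteq> {}" using False Suc.prems unfolding dominating_set_def undom_def by auto
    have finW: "finite ?W" using fin unfolding undom_def by auto
    have val: "ind_game_val V E (Suc n) D = Min (?f ` ?W)"
      using False by (simp add: undom_def)
    have key: "alphaU V E ?W \<le> ?f v" if vW: "v \<in> ?W" for v
    proof -
      have vV: "v \<in> V" using vW unfolding undom_def by auto
      obtain I where I: "I \<subseteq> ?W" "independent_set V E I" "card I = alphaU V E ?W"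
        using alphaU_attained[OF fin] by blast
      have finI: "finite I" using I(1) finW finite_subset by blast
      have "\<exists>u\<in>I. u \<in> closed_nbhd V E v"
      proof (cases "v \<in> I")
        case True then show ?thesis using vV by (auto simp: closed_nbhd_iff)
      next
        case False
        have "\<not> independent_set V E (insert v I)"
        proof
          assume ind: "independent_set V E (insert v I)"
          have "card (insert v I) \<le> alphaU V E ?W"
            using alphaU_ge[OF fin _ ind] I(1) vW by auto
          moreover have "card (insert v I) = Suc (card I)" using False finI by simp
          ultimately show False using I(3) by simp
        qed
        then obtain w where w: "w \<in> I" "E v w \<or> E w v"
          using I(2) vV irr unfolding independent_set_def by auto
        have "E v w" using w(2) sym by blast
        hence "w \<in> closed_nbhd V E v" using inV by (simp add: closed_nbhd_iff)
        then show ?thesis using w(1) by blast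
      qed
      then obtain u where u: "u \<in> I" "u \<in> closed_nbhd V E v" by blast
      have uV: "u \<in> V" using u(2) by (simp add: closed_nbhd_iff)
      have D': "insert u D \<subseteq> V" using Suc.prems(1) uV by auto
      from u(2) have "u = v \<or> E v u" by (simp add: closed_nbhd_iff)
      hence "v = u \<or> E u v" using sym by blast
      hence vdom: "dominated V E (insert u D) v" using vV by (simp add: dominated_insert)
      have sub: "undom V E (insert u D) \<subseteq> ?W - {v}"
        using undom_insert_sub[of V E u D] vdom unfolding undom_def by auto
      have "card (undom V E (insert u D)) \<le> card (?W - {v})"
        using sub finW by (intro card_mono) auto
      also have "\<dots> = card ?W - 1" using vW finW by simp
      finally have cn: "card (undom V E (insert u D)) \<le> n" using Suc.prems(2) by simp
      have IH: "alphaU V E (undom V E (insert u D)) \<le> ind_game_val V E n (insert u D)"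
        using Suc.IH[OF D' cn] .
      have sub2: "I - {u} \<subseteq> undom V E (insert u D)"
      proof
        fix x assume x: "x \<in> I - {u}"
        have "x \<in> ?W" using x I(1) by auto
        moreover have "\<not> E u x" using x u(1) I(2) unfolding independent_set_def by auto
        ultimately show "x \<in> undom V E (insert u D)"
          using x unfolding undom_def by (auto simp: dominated_insert)
      qed
      have ind2: "independent_set V E (I - {u})" using I(2) unfolding independent_set_def by auto
      have "card (I - {u}) \<le> alphaU V E (undom V E (insert u D))"
        using alphaU_ge[OF fin sub2 ind2] .
      hence "card I \<le> Suc (ind_game_val V E n (insert u D))"
        using IH u(1) finI by (simp add: card_Diff_singleton)
      also have "\<dots> \<le> ?f v"
        using u(2) fin by (intro Max_ge) (auto simp: closed_nbhd_def)
      finally show ?thesis using I(3) by simp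
    qed
    have "alphaU V E ?W \<le> Min (?f ` ?W)"
      using key finW Wne by (subst Min_ge_iff) auto
    then show ?thesis unfolding val .
  qed
qed

locale rtree =
  fixes V :: "'a set" and E :: "'a \<Rightarrow> 'a \<Rightarrow> bool" and r :: 'a
    and dep :: "'a \<Rightarrow> nat" and par :: "'a \<Rightarrow> 'a" and fr :: "'a \<Rightarrow> bool"
  assumes g: "graph V E"
  and par_in: "\<And>x. x \<in> V \<Longrightarrow> x \<noteq> r \<Longrightarrow> par x \<in> V"
  and par_E: "\<And>x. x \<in> V \<Longrightarrow> x \<noteq> r \<Longrightarrow> E x (par x)"
  and par_dep: "\<And>x. x \<in> V \<Longrightarrow> x \<noteq> r \<Longrightarrow> dep x = Suc (dep (par x))"
  and edge: "\<And>x y. E x y \<Longrightarrow> (x \<noteq> r \<and> y = par x) \<or> (y \<noteq> r \<and> x = par y)"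
  and fr_char: "\<And>x. x \<in> V \<Longrightarrow> fr x \<longleftrightarrow> (\<forall>c\<in>V. c \<noteq> r \<longrightarrow> par c = x \<longrightarrow> \<not> fr c)"
begin

lemma finV: "finite V" using g by (simp add: graph_def)
lemma Esym: "E x y \<Longrightarrow> E y x" using g by (simp add: graph_def)
lemma Eirr: "\<not> E x x" using g by (simp add: graph_def)
lemma EV1: "E x y \<Longrightarrow> x \<in> V" using g by (simp add: graph_def)
lemma EV2: "E x y \<Longrightarrow> y \<in> V" using g by (simp add: graph_def)

lemma nbr_dep: assumes "E x y" shows "dep y \<le> Suc (dep x)"
proof -
  have xV: "x \<in> V" and yV: "y \<in> V" using EV1[OF assms] EV2[OF assms] .
  from edge[OF assms] show ?thesis
  proof
    assume "x \<noteq> r \<and> y = par x"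
    then show ?thesis using par_dep[OF xV] by simp
  next
    assume "y \<noteq> r \<and> x = par y"
    then show ?thesis using par_dep[OF yV] by simp
  qed
qed

definition complete :: "'a set \<Rightarrow> 'a \<Rightarrow> bool" where
  "complete D f \<longleftrightarrow> dominated V E D f \<and> (f \<noteq> r \<longrightarrow> dominated V E D (par f))"

definition Sset :: "'a set \<Rightarrow> 'a set" where
  "Sset D = {f \<in> V. fr f \<and> \<not> complete D f}"

definition Inv :: "'a set \<Rightarrow> bool" where
  "Inv D \<longleftrightarrow> (\<forall>x\<in>D. \<forall>y\<in>undom V E D. dep x \<le> dep y + 2)"

lemma dom_mono: "dominated V E D x \<Longrightarrow> dominated V E (insert u D) x"
  by (simp add: dominated_insert)

lemma complete_mono: "complete D f \<Longrightarrow> complete (insert u D) f"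
  unfolding complete_def using dom_mono by blast

lemma Sset_mono: "Sset (insert u D) \<subseteq> Sset D"
  unfolding Sset_def using complete_mono by blast

lemma Sset_less:
  assumes "f \<in> Sset D" "\<not> f \<in> Sset (insert u D)"
  shows "card (Sset (insert u D)) < card (Sset D)"
proof -
  have "finite (Sset D)" using finV unfolding Sset_def by auto
  moreover have "Sset (insert u D) \<subset> Sset D" using Sset_mono assms by blast
  ultimately show ?thesis by (rule psubset_card_mono)
qed

lemma Inv_insert:
  assumes "Inv D" "\<And>y. y \<in> undom V E D \<Longrightarrow> dep u \<le> dep y + 2"
  shows "Inv (insert u D)"
  unfolding Inv_def
proof (intro ballI)
  fix x y assume x: "x \<in> insert u D" and y: "y \<in> undom V E (insert u D)"
  have y': "y \<in> undom V E D" using y undom_insert_sub[of V E u D] by blast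
  show "dep x \<le> dep y + 2"
  proof (cases "x = u")
    case True then show ?thesis using assms(2)[OF y'] by simp
  next
    case False then have "x \<in> D" using x by simp
    then show ?thesis using assms(1) y' unfolding Inv_def by blast
  qed
qed

lemma in_undom: "v \<in> undom V E D \<longleftrightarrow> v \<in> V \<and> \<not> dominated V E D v"
  by (simp add: undom_def)

lemma dom_ins_self: "x \<in> V \<Longrightarrow> dominated V E (insert x D) x"
  by (simp add: dominated_insert)

lemma dom_ins_nb: "E u x \<Longrightarrow> dominated V E (insert u D) x"
  using EV2 by (simp add: dominated_insert)

lemma step:
  assumes DV: "D \<subseteq> V" and inv: "Inv D" and ne: "undom V E D \<noteq> {}"
  shows "\<exists>v\<in>undom V E D. \<forall>u\<in>closed_nbhd V E v.
           card (Sset (insert u D)) < card (Sset D) \<and> Inv (insert u D)"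
proof -
  let ?W = "undom V E D"
  obtain v0 where v0W: "v0 \<in> ?W" and v0min: "\<And>y. y \<in> ?W \<Longrightarrow> dep v0 \<le> dep y"
    using ex_has_least_nat[of "\<lambda>x. x \<in> ?W" _ dep] ne by blast
  have v0V: "v0 \<in> V" and v0nd: "\<not> dominated V E D v0" using v0W by (auto simp: in_undom)
  have below: "dominated V E D z" if "z \<in> V" "dep z < dep v0" for z
  proof (rule ccontr)
    assume "\<not> dominated V E D z"
    then have "z \<in> ?W" using that(1) by (simp add: in_undom)
    then show False using v0min that(2) by fastforce
  qed
  have Dbound: "dep x \<le> dep v0 + 2" if "x \<in> D" for x
    using inv v0W that unfolding Inv_def by blast
  show ?thesis
  proof (cases "fr v0")
    case True
    show ?thesis
    proof (intro bexI[of _ v0] ballI conjI)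
      fix u assume u: "u \<in> closed_nbhd V E v0"
      have uV: "u \<in> V" and uv: "u = v0 \<or> E v0 u" using u by (auto simp: closed_nbhd_iff)
      have "v0 \<in> Sset D" using v0V True v0nd unfolding Sset_def complete_def by simp
      moreover have "complete (insert u D) v0"
      proof -
        have "dominated V E (insert u D) v0"
          using uv dom_ins_self[OF v0V] dom_ins_nb Esym by blast
        moreover have "dominated V E (insert u D) (par v0)" if "v0 \<noteq> r"
        proof -
          have "par v0 \<in> V" "dep (par v0) < dep v0"
            using par_in[OF v0V that] par_dep[OF v0V that] by auto
          then show ?thesis using below dom_mono by blast
        qed
        ultimately show ?thesis unfolding complete_def by blast
      qed
      hence "v0 \<notin> Sset (insert u D)" unfolding Sset_def by blast
      ultimately show "card (Sset (insert u D)) < card (Sset D)" by (rule Sset_less)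
      have "dep u \<le> Suc (dep v0)" using uv nbr_dep by auto
      then show "Inv (insert u D)"
        using inv v0min by (intro Inv_insert) fastforce+
    qed (rule v0W)
  next
    case False
    then obtain c where cV: "c \<in> V" and cr: "c \<noteq> r" and cp: "par c = v0" and frc: "fr c"
      using fr_char[OF v0V] by blast
    have dep_c: "dep c = Suc (dep v0)" using par_dep[OF cV cr] cp by simp
    have Ecv: "E c v0" using par_E[OF cV cr] cp by simp
    show ?thesis
    proof (cases "\<exists>c'\<in>V. c' \<noteq> r \<and> par c' = v0 \<and> fr c' \<and> c' \<in> ?W")
      case True
      then obtain c where cV: "c \<in> V" and cr: "c \<noteq> r" and cp: "par c = v0" and frc: "fr c"
        and cW: "c \<in> ?W" by blast
      have dep_c: "dep c = Suc (dep v0)" using par_dep[OF cV cr] cp by simp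
      have Ecv: "E c v0" using par_E[OF cV cr] cp by simp
      have cnd: "\<not> dominated V E D c" using cW by (simp add: in_undom)
      have cS: "c \<in> Sset D" using cV frc cnd unfolding Sset_def complete_def by simp
      show ?thesis
      proof (intro bexI[of _ c] ballI)
        fix u assume u: "u \<in> closed_nbhd V E c"
        have uV: "u \<in> V" and uc: "u = c \<or> E c u" using u by (auto simp: closed_nbhd_iff)
        show "card (Sset (insert u D)) < card (Sset D) \<and> Inv (insert u D)"
        proof (cases "u = c \<or> u = v0")
          case True
          have "dominated V E (insert u D) c"
            using True dom_ins_self[OF cV] dom_ins_nb Ecv Esym by blast
          moreover have "dominated V E (insert u D) v0"
            using True dom_ins_self[OF v0V] dom_ins_nb Ecv by blast
          ultimately have "complete (insert u D) c" unfolding complete_def using cp by simp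
          hence "c \<notin> Sset (insert u D)" unfolding Sset_def by blast
          hence "card (Sset (insert u D)) < card (Sset D)" using cS by (intro Sset_less)
          moreover have "dep u \<le> Suc (dep v0)" using True dep_c by auto
          hence "Inv (insert u D)" using inv v0min by (intro Inv_insert) fastforce+
          ultimately show ?thesis by blast
        next
          case False
          then have Ecu: "E c u" using uc by blast
          have upar: "u \<noteq> r \<and> c = par u"
            using edge[OF Ecu] False cp by auto
          have dep_u: "dep u = Suc (dep c)" using par_dep[OF uV] upar by simp
          have "\<not> fr u" using fr_char[OF cV] frc uV upar by blast
          then obtain e where eV: "e \<in> V" and er: "e \<noteq> r" and ep: "par e = u" and fre: "fr e"
            using fr_char[OF uV] by blast
          have dep_e: "dep e = Suc (dep u)" using par_dep[OF eV er] ep by simp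
          have Eeu: "E e u" using par_E[OF eV er] ep by simp
          have e_nd: "\<not> dominated V E D e"
          proof
            assume "dominated V E D e"
            then obtain x where xD: "x \<in> D" and xe: "e = x \<or> E x e"
              unfolding dominated_def closed_nbhd_def by auto
            have "dep x \<le> dep v0 + 2" using Dbound[OF xD] .
            hence "x \<noteq> e" using dep_e dep_u dep_c by auto
            hence Exe: "E x e" using xe by blast
            from edge[OF Exe] show False
            proof
              assume "x \<noteq> r \<and> e = par x"
              then have "dep x = Suc (dep e)" using par_dep EV1[OF Exe] by auto
              then show False using \<open>dep x \<le> dep v0 + 2\<close> dep_e dep_u dep_c by simp
            next
              assume "e \<noteq> r \<and> x = par e"
              then have "x = u" using ep by simp
              then have "dominated V E D c" using xD Esym[OF Ecu] cV
                unfolding dominated_def closed_nbhd_def by auto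
              then show False using cnd by simp
            qed
          qed
          have eS: "e \<in> Sset D" using eV fre e_nd unfolding Sset_def complete_def by simp
          have "dominated V E (insert u D) e" using dom_ins_nb Esym[OF Eeu] by blast
          moreover have "dominated V E (insert u D) u" using dom_ins_self[OF uV] .
          ultimately have "complete (insert u D) e" unfolding complete_def using ep by simp
          hence "e \<notin> Sset (insert u D)" unfolding Sset_def by blast
          hence "card (Sset (insert u D)) < card (Sset D)" using eS by (intro Sset_less)
          moreover have "dep u \<le> dep v0 + 2" using dep_u dep_c by simp
          hence "Inv (insert u D)" using inv v0min by (intro Inv_insert) fastforce+
          ultimately show ?thesis by blast
        qed
      qed (rule cW)
    next
      case False
      then have cD: "dominated V E D c" using cV cr cp frc by (auto simp: in_undom)
      have cS: "c \<in> Sset D" using cV frc v0nd cr cp unfolding Sset_def complete_def by simp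
      show ?thesis
      proof (intro bexI[of _ v0] ballI)
        fix u assume u: "u \<in> closed_nbhd V E v0"
        have uV: "u \<in> V" and uv: "u = v0 \<or> E v0 u" using u by (auto simp: closed_nbhd_iff)
        have "dominated V E (insert u D) v0"
          using uv dom_ins_self[OF v0V] dom_ins_nb Esym by blast
        moreover have "dominated V E (insert u D) c" using cD dom_mono by blast
        ultimately have "complete (insert u D) c" unfolding complete_def using cp by simp
        hence "c \<notin> Sset (insert u D)" unfolding Sset_def by blast
        hence "card (Sset (insert u D)) < card (Sset D)" using cS by (intro Sset_less)
        moreover have "dep u \<le> Suc (dep v0)" using uv nbr_dep by auto
        hence "Inv (insert u D)" using inv v0min by (intro Inv_insert) fastforce+
        ultimately show "card (Sset (insert u D)) < card (Sset D) \<and> Inv (insert u D)" by blast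
      qed (rule v0W)
    qed
  qed
qed

lemma upper:
  "D \<subseteq> V \<Longrightarrow> Inv D \<Longrightarrow> ind_game_val V E n D \<le> card (Sset D)"
proof (induction n arbitrary: D)
  case 0 then show ?case by simp
next
  case (Suc n)
  show ?case
  proof (cases "dominating_set V E D")
    case True
    then have "ind_game_val V E (Suc n) D = 0" by simp
    then show ?thesis by simp
  next
    case False
    let ?W = "undom V E D"
    let ?f = "\<lambda>v. Max ((\<lambda>u. Suc (ind_game_val V E n (insert u D))) ` closed_nbhd V E v)"
    have Wne: "?W \<noteq> {}" using False Suc.prems unfolding dominating_set_def undom_def by auto
    have finW: "finite ?W" using finV unfolding undom_def by auto
    have val: "ind_game_val V E (Suc n) D = Min (?f ` ?W)"
      using False by (simp add: undom_def)
    obtain v where vW: "v \<in> ?W" and hv: "\<forall>u\<in>closed_nbhd V E v.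
           card (Sset (insert u D)) < card (Sset D) \<and> Inv (insert u D)"
      using step[OF Suc.prems Wne] by blast
    have vV: "v \<in> V" using vW by (simp add: in_undom)
    have "?f v \<le> card (Sset D)"
    proof (subst Max_le_iff)
      show "finite ((\<lambda>u. Suc (ind_game_val V E n (insert u D))) ` closed_nbhd V E v)"
        using finV by (auto simp: closed_nbhd_def)
      show "(\<lambda>u. Suc (ind_game_val V E n (insert u D))) ` closed_nbhd V E v \<noteq> {}"
        using vV by (auto simp: closed_nbhd_def)
      show "\<forall>a\<in>(\<lambda>u. Suc (ind_game_val V E n (insert u D))) ` closed_nbhd V E v. a \<le> card (Sset D)"
      proof
        fix a assume "a \<in> (\<lambda>u. Suc (ind_game_val V E n (insert u D))) ` closed_nbhd V E v"
        then obtain u where u: "u \<in> closed_nbhd V E v" and a: "a = Suc (ind_game_val V E n (insert u D))"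
          by blast
        have uV: "u \<in> V" using u by (simp add: closed_nbhd_iff)
        have "ind_game_val V E n (insert u D) \<le> card (Sset (insert u D))"
          using Suc.IH[of "insert u D"] Suc.prems(1) uV hv u by blast
        then show "a \<le> card (Sset D)" using a hv u by fastforce
      qed
    qed
    moreover have "Min (?f ` ?W) \<le> ?f v" using finW vW by (intro Min_le) auto
    ultimately show ?thesis unfolding val by linarith
  qed
qed

lemma fr_indep: "independent_set V E {f \<in> V. fr f}"
  unfolding independent_set_def
proof (intro conjI ballI)
  show "{f \<in> V. fr f} \<subseteq> V" by blast
  fix x y assume x: "x \<in> {f \<in> V. fr f}" and y: "y \<in> {f \<in> V. fr f}"
  show "\<not> E x y"
  proof
    assume Exy: "E x y"
    from edge[OF Exy] show False
    proof
      assume "x \<noteq> r \<and> y = par x"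
      then show False using fr_char[of y] x y by auto
    next
      assume "y \<noteq> r \<and> x = par y"
      then show False using fr_char[of x] x y by auto
    qed
  qed
qed

lemma upper_final: "indicated_domination_number V E \<le> independence_number V E"
proof -
  have "Inv {}" unfolding Inv_def by simp
  then have "ind_game_val V E (card V) {} \<le> card (Sset {})" using upper by blast
  also have "card (Sset {}) \<le> card {f \<in> V. fr f}"
    using finV unfolding Sset_def by (intro card_mono) auto
  also have "\<dots> \<le> alphaU V E V" using alphaU_ge[OF finV _ fr_indep] by blast
  also have "alphaU V E V = independence_number V E"
    unfolding alphaU_def independence_number_def independent_set_def by metis
  finally show ?thesis unfolding indicated_domination_number_def .
qed

end

definition ispath :: "('a \<Rightarrow> 'a \<Rightarrow> bool) \<Rightarrow> 'a list \<Rightarrow> bool" where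
  "ispath E xs \<longleftrightarrow> distinct xs \<and> (\<forall>i. Suc i < length xs \<longrightarrow> E (xs ! i) (xs ! Suc i))"

lemma path_snoc:
  assumes "ispath E xs" "xs \<noteq> []" "E (last xs) z" "z \<notin> set xs"
  shows "ispath E (xs @ [z])"
  unfolding ispath_def
proof (intro conjI allI impI)
  show "distinct (xs @ [z])" using assms(1,4) by (simp add: ispath_def)
  fix i assume i: "Suc i < length (xs @ [z])"
  show "E ((xs @ [z]) ! i) ((xs @ [z]) ! Suc i)"
  proof (cases "Suc i < length xs")
    case True
    then show ?thesis using assms(1) by (simp add: ispath_def nth_append)
  next
    case False
    then have si: "Suc i = length xs" using i by simp
    have ii: "i = length xs - 1" using si by simp
    have "(xs @ [z]) ! i = last xs"
      using si assms(2) by (simp add: nth_append last_conv_nth ii)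
    moreover have "(xs @ [z]) ! Suc i = z" using si by (simp add: nth_append)
    ultimately show ?thesis using assms(3) by simp
  qed
qed

lemma leaf_exists:
  assumes t: "tree V E" and c2: "2 \<le> card V"
  shows "\<exists>l s. l \<in> V \<and> E l s \<and> (\<forall>t. E l t \<longrightarrow> t = s)"
proof (rule ccontr)
  assume nl: "\<not> ?thesis"
  have g: "graph V E" and con: "connected_graph V E" and nc: "\<nexists>xs. is_cycle E xs"
    using t by (auto simp: tree_def)
  have finV: "finite V" using g by (simp add: graph_def)
  have sym: "E x y \<Longrightarrow> E y x" for x y using g by (simp add: graph_def)
  have irr: "\<not> E x x" for x using g by (simp add: graph_def)
  have EV: "E x y \<Longrightarrow> x \<in> V \<and> y \<in> V" for x y using g by (simp add: graph_def)
  have deg2: "\<exists>t. E x t \<and> t \<noteq> s" if "x \<in> V" "E x s" for x s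
    using nl that by blast
  have deg1: "\<exists>y. E x y" if xV: "x \<in> V" for x
  proof -
    have "\<exists>y\<in>V. y \<noteq> x"
    proof (rule ccontr)
      assume "\<not> (\<exists>y\<in>V. y \<noteq> x)"
      then have "V \<subseteq> {x}" by blast
      then have "card V \<le> 1" using card_mono[of "{x}" V] by simp
      then show False using c2 by simp
    qed
    then obtain y where yV: "y \<in> V" and yx: "y \<noteq> x" by blast
    have "E\<^sup>*\<^sup>* x y" using con xV yV by (simp add: connected_graph_def)
    then show ?thesis
    proof (cases rule: converse_rtranclpE)
      case base then show ?thesis using yx by simp
    next
      case (step z) then show ?thesis by blast
    qed
  qed
  let ?P = "\<lambda>xs. ispath E xs \<and> xs \<noteq> [] \<and> set xs \<subseteq> V"
  have bound: "length xs \<le> card V" if "?P xs" for xs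
  proof -
    have "length xs = card (set xs)" using that distinct_card[of xs] by (simp add: ispath_def)
    also have "\<dots> \<le> card V" using that finV by (intro card_mono) auto
    finally show ?thesis .
  qed
  have "V \<noteq> {}" using c2 by auto
  then obtain x0 where x0: "x0 \<in> V" by blast
  have P0: "?P [x0]" using x0 by (simp add: ispath_def)
  let ?Q = "\<lambda>k. \<exists>xs. ?P xs \<and> length xs = k"
  have Q1: "?Q 1" using P0 by (intro exI[of _ "[x0]"]) simp
  have Qb: "\<forall>y. ?Q y \<longrightarrow> y \<le> card V" using bound by blast
  obtain m where m: "?Q m" and mmax: "\<forall>k. ?Q k \<longrightarrow> k \<le> m"
    using Nat.ex_has_greatest_nat[where P="?Q", OF Q1 Qb] by blast
  then obtain xs where Pxs: "?P xs" and lxs: "length xs = m" by blast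
  have longest: "\<not> ?P (xs @ [z])" for z
  proof
    assume "?P (xs @ [z])"
    then have "length (xs @ [z]) \<le> m" using mmax by blast
    then show False using lxs by simp
  qed
  have pth: "ispath E xs" and xne: "xs \<noteq> []" and xsV: "set xs \<subseteq> V" using Pxs by auto
  let ?e = "last xs"
  have eV: "?e \<in> V" using xne xsV last_in_set by blast
  have ext: "z \<in> set xs" if "E ?e z" for z
  proof (rule ccontr)
    assume "z \<notin> set xs"
    then have "?P (xs @ [z])" using path_snoc[OF pth xne that] EV[OF that] xsV by auto
    then show False using longest by blast
  qed
  show False
  proof (cases "length xs = 1")
    case True
    obtain z where Ez: "E ?e z" using deg1[OF eV] by blast
    have "z \<in> set xs" using ext[OF Ez] .
    moreover have "set xs = {?e}" using True xne
      by (cases xs) auto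
    ultimately show False using Ez irr by simp
  next
    case False
    have "0 < length xs" using xne by simp
    hence l2: "2 \<le> length xs" using False by linarith
    let ?p = "xs ! (length xs - 2)"
    have lastn: "?e = xs ! (length xs - 1)" using xne by (simp add: last_conv_nth)
    have "Suc (length xs - 2) < length xs" using l2 by simp
    hence "E ?p (xs ! Suc (length xs - 2))"
      using pth unfolding ispath_def by blast
    moreover have "Suc (length xs - 2) = length xs - 1" using l2 by simp
    ultimately have Epe: "E ?p ?e" using lastn by simp
    obtain z where Ez: "E ?e z" and zp: "z \<noteq> ?p" using deg2[OF eV sym[OF Epe]] by blast
    have "z \<in> set xs" using ext[OF Ez] .
    then obtain j where jl: "j < length xs" and zj: "xs ! j = z" by (auto simp: in_set_conv_nth)
    have "j \<noteq> length xs - 1" using zj lastn Ez irr by auto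
    moreover have "j \<noteq> length xs - 2" using zj zp by auto
    ultimately have j3: "j + 3 \<le> length xs" using jl by linarith
    have "is_cycle E (drop j xs)"
      unfolding is_cycle_def
    proof (intro conjI allI impI)
      show "3 \<le> length (drop j xs)" using j3 by simp
      show "distinct (drop j xs)" using pth by (simp add: ispath_def)
      fix i assume "Suc i < length (drop j xs)"
      then have "Suc (j + i) < length xs" by simp
      then have "E (xs ! (j + i)) (xs ! Suc (j + i))" using pth by (simp add: ispath_def)
      then show "E (drop j xs ! i) (drop j xs ! Suc i)" using jl by simp
    next
      show "E (last (drop j xs)) (hd (drop j xs))"
        using jl Ez zj by (simp add: hd_drop_conv_nth)
    qed
    then show False using nc by blast
  qed
qed

lemma rtranclp_avoid:
  assumes "E\<^sup>*\<^sup>* x y" "x \<noteq> l" "\<And>t. E l t \<Longrightarrow> t = s" "\<And>t. E t l \<Longrightarrow> t = s" "\<not> E l l"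
  shows "(y = l \<longrightarrow> (\<lambda>a b. E a b \<and> a \<noteq> l \<and> b \<noteq> l)\<^sup>*\<^sup>* x s) \<and>
         (y \<noteq> l \<longrightarrow> (\<lambda>a b. E a b \<and> a \<noteq> l \<and> b \<noteq> l)\<^sup>*\<^sup>* x y)"
  using assms(1)
proof (induction rule: rtranclp_induct)
  case base then show ?case using assms(2) by simp
next
  case (step y z)
  let ?E' = "\<lambda>a b. E a b \<and> a \<noteq> l \<and> b \<noteq> l"
  show ?case
  proof (cases "z = l")
    case True
    then have "y \<noteq> l" using step.hyps(2) assms(5) by auto
    moreover have "y = s" using True step.hyps(2) assms(4) by simp
    ultimately show ?thesis using step.IH True by simp
  next
    case False
    show ?thesis
    proof (cases "y = l")
      case True
      then have "z = s" using step.hyps(2) assms(3) by simp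
      then show ?thesis using step.IH True False by simp
    next
      case yl: False
      then have "?E'\<^sup>*\<^sup>* x y" using step.IH by simp
      moreover have "?E' y z" using step.hyps(2) yl False by simp
      ultimately show ?thesis using False by (simp add: rtranclp.rtrancl_into_rtrancl)
    qed
  qed
qed

lemma rooted:
  "card V = n \<Longrightarrow> tree V E \<Longrightarrow> \<exists>r dep par. r \<in> V \<and>
     (\<forall>x\<in>V. x \<noteq> r \<longrightarrow> par x \<in> V \<and> E x (par x) \<and> dep x = Suc (dep (par x))) \<and>
     (\<forall>x y. E x y \<longrightarrow> (x \<noteq> r \<and> y = par x) \<or> (y \<noteq> r \<and> x = par y))"
proof (induction n arbitrary: V E)
  case 0
  then have "finite V" "V \<noteq> {}" by (auto simp: tree_def graph_def)
  then show ?case using 0 by simp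
next
  case (Suc n)
  have g: "graph V E" and ne: "V \<noteq> {}" and con: "connected_graph V E" and nc: "\<nexists>xs. is_cycle E xs"
    using Suc.prems(2) by (auto simp: tree_def)
  have finV: "finite V" using g by (simp add: graph_def)
  have sym: "E x y \<Longrightarrow> E y x" for x y using g by (simp add: graph_def)
  have irr: "\<not> E x x" for x using g by (simp add: graph_def)
  have EV: "E x y \<Longrightarrow> x \<in> V \<and> y \<in> V" for x y using g by (simp add: graph_def)
  show ?case
  proof (cases "n = 0")
    case True
    then obtain r where V1: "V = {r}" using Suc.prems(1) card_1_singletonE by auto
    have "\<not> E x y" for x y
    proof
      assume "E x y"
      then have "x = r" "y = r" using EV V1 by auto
      then show False using \<open>E x y\<close> irr by simp
    qed
    then show ?thesis using V1
      by (intro exI[of _ r] exI[of _ "\<lambda>_. 0"] exI[of _ "\<lambda>x. x"]) auto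
  next
    case False
    then have c2: "2 \<le> card V" using Suc.prems(1) by simp
    obtain l s where lV: "l \<in> V" and Els: "E l s" and uniq: "\<And>t. E l t \<Longrightarrow> t = s"
      using leaf_exists[OF Suc.prems(2) c2] by blast
    have uniq2: "\<And>t. E t l \<Longrightarrow> t = s" using uniq sym by blast
    have sV: "s \<in> V" using EV[OF Els] by simp
    have sl: "s \<noteq> l" using Els irr by auto
    let ?V' = "V - {l}"
    let ?E' = "\<lambda>a b. E a b \<and> a \<noteq> l \<and> b \<noteq> l"
    have cardV': "card ?V' = n" using Suc.prems(1) lV finV by simp
    have tree': "tree ?V' ?E'"
      unfolding tree_def
    proof (intro conjI)
      show "graph ?V' ?E'" using g unfolding graph_def by auto
      show "?V' \<noteq> {}" using sV sl by blast
      show "connected_graph ?V' ?E'"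
        unfolding connected_graph_def
      proof (intro ballI)
        fix x y assume x: "x \<in> ?V'" and y: "y \<in> ?V'"
        have "E\<^sup>*\<^sup>* x y" using con x y by (simp add: connected_graph_def)
        from rtranclp_avoid[OF this _ uniq uniq2 irr] x y
        show "?E'\<^sup>*\<^sup>* x y" by simp
      qed
      show "\<nexists>xs. is_cycle ?E' xs"
      proof
        assume "\<exists>xs. is_cycle ?E' xs"
        then obtain xs where "is_cycle ?E' xs" by blast
        then have "is_cycle E xs" unfolding is_cycle_def by auto
        then show False using nc by blast
      qed
    qed
    obtain r dep par where rV: "r \<in> ?V'"
      and pr: "\<forall>x\<in>?V'. x \<noteq> r \<longrightarrow> par x \<in> ?V' \<and> ?E' x (par x) \<and> dep x = Suc (dep (par x))"
      and ed: "\<forall>x y. ?E' x y \<longrightarrow> (x \<noteq> r \<and> y = par x) \<or> (y \<noteq> r \<and> x = par y)"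
      using Suc.IH[OF cardV' tree'] by blast
    have rl: "r \<noteq> l" using rV by simp
    define dep' where "dep' = dep(l := Suc (dep s))"
    define par' where "par' = par(l := s)"
    show ?thesis
    proof (intro exI conjI)
      show "r \<in> V" using rV by simp
      show "\<forall>x\<in>V. x \<noteq> r \<longrightarrow> par' x \<in> V \<and> E x (par' x) \<and> dep' x = Suc (dep' (par' x))"
      proof (intro ballI impI)
        fix x assume xV: "x \<in> V" and xr: "x \<noteq> r"
        show "par' x \<in> V \<and> E x (par' x) \<and> dep' x = Suc (dep' (par' x))"
        proof (cases "x = l")
          case True
          then show ?thesis using sV Els sl unfolding par'_def dep'_def by simp
        next
          case False
          then have "par x \<in> ?V' \<and> ?E' x (par x) \<and> dep x = Suc (dep (par x))"
            using pr xV xr by blast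
          then show ?thesis using False unfolding par'_def dep'_def by auto
        qed
      qed
      show "\<forall>x y. E x y \<longrightarrow> (x \<noteq> r \<and> y = par' x) \<or> (y \<noteq> r \<and> x = par' y)"
      proof (intro allI impI)
        fix x y assume Exy: "E x y"
        show "(x \<noteq> r \<and> y = par' x) \<or> (y \<noteq> r \<and> x = par' y)"
        proof (cases "x = l")
          case True
          then have "y = s" using uniq Exy by simp
          then show ?thesis using True rl unfolding par'_def by simp
        next
          case xl: False
          show ?thesis
          proof (cases "y = l")
            case True
            then have "x = s" using uniq2 Exy by simp
            then show ?thesis using True rl unfolding par'_def by simp
          next
            case False
            then have "(x \<noteq> r \<and> y = par x) \<or> (y \<noteq> r \<and> x = par y)" using ed Exy xl by blast
            then show ?thesis using xl False unfolding par'_def by auto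
          qed
        qed
      qed
    qed
  qed
qed

fun frk :: "'a set \<Rightarrow> ('a \<Rightarrow> 'a) \<Rightarrow> 'a \<Rightarrow> nat \<Rightarrow> 'a \<Rightarrow> bool" where
  "frk V par r 0 x = True"
| "frk V par r (Suc k) x = (\<forall>c\<in>V. c \<noteq> r \<longrightarrow> par c = x \<longrightarrow> \<not> frk V par r k c)"

lemma frk_stable:
  assumes pd: "\<And>x. x \<in> V \<Longrightarrow> x \<noteq> r \<Longrightarrow> dep x = Suc (dep (par x))"
    and bd: "\<And>y. y \<in> V \<Longrightarrow> dep y \<le> H"
  shows "x \<in> V \<Longrightarrow> H - dep x \<le> k \<Longrightarrow> H - dep x \<le> k' \<Longrightarrow> frk V par r k x = frk V par r k' x"
proof (induction k arbitrary: k' x)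
  case 0
  have nochild: "\<not> (c \<in> V \<and> c \<noteq> r \<and> par c = x)" for c
  proof
    assume c: "c \<in> V \<and> c \<noteq> r \<and> par c = x"
    then have "dep c = Suc (dep x)" using pd by auto
    moreover have "dep c \<le> H" using bd c by auto
    ultimately show False using 0 by simp
  qed
  show ?case using nochild by (cases k') auto
next
  case (Suc k)
  show ?case
  proof (cases k')
    case 0
    have nochild: "\<not> (c \<in> V \<and> c \<noteq> r \<and> par c = x)" for c
    proof
      assume c: "c \<in> V \<and> c \<noteq> r \<and> par c = x"
      then have "dep c = Suc (dep x)" using pd by auto
      moreover have "dep c \<le> H" using bd c by auto
      ultimately show False using Suc.prems 0 by simp
    qed
    then show ?thesis using 0 by auto
  next
    case (Suc j)
    have "frk V par r k c = frk V par r j c" if c: "c \<in> V" "c \<noteq> r" "par c = x" for c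
    proof -
      have "dep c = Suc (dep x)" using pd c by auto
      then have "H - dep c \<le> k" "H - dep c \<le> j"
        using Suc.prems \<open>k' = Suc j\<close> by auto
      then show ?thesis using Suc.IH c(1) by blast
    qed
    then show ?thesis using Suc by auto
  qed
qed

lemma fr_exists:
  assumes fin: "finite V"
    and pd: "\<And>x. x \<in> V \<Longrightarrow> x \<noteq> r \<Longrightarrow> dep x = Suc (dep (par x))"
  shows "\<exists>fr. \<forall>x\<in>V. fr x \<longleftrightarrow> (\<forall>c\<in>V. c \<noteq> r \<longrightarrow> par c = x \<longrightarrow> \<not> fr c)"
proof -
  define H where "H = Max (dep ` V)"
  have bd: "\<And>y. y \<in> V \<Longrightarrow> dep y \<le> H" unfolding H_def using fin by simp
  have st: "frk V par r H c = frk V par r (Suc H) c" if "c \<in> V" for c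
    using frk_stable[where V=V and r=r and dep=dep and par=par and H=H, OF pd bd that, of H "Suc H"]
    by (simp del: frk.simps)
  show ?thesis
  proof (intro exI[of _ "frk V par r (Suc H)"] ballI)
    fix x assume "x \<in> V"
    show "frk V par r (Suc H) x \<longleftrightarrow> (\<forall>c\<in>V. c \<noteq> r \<longrightarrow> par c = x \<longrightarrow> \<not> frk V par r (Suc H) c)"
      using st by auto
  qed
qed

theorem theorem5p2:
  fixes V :: "'a set" and E :: "'a \<Rightarrow> 'a \<Rightarrow> bool"
  assumes "tree V E"
  shows "indicated_domination_number V E = independence_number V E"
proof -
  have g: "graph V E" using assms by (simp add: tree_def)
  have finV: "finite V" using g by (simp add: graph_def)
  obtain r dep par where rV: "r \<in> V"
    and pr: "\<forall>x\<in>V. x \<noteq> r \<longrightarrow> par x \<in> V \<and> E x (par x) \<and> dep x = Suc (dep (par x))"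
    and ed: "\<forall>x y. E x y \<longrightarrow> (x \<noteq> r \<and> y = par x) \<or> (y \<noteq> r \<and> x = par y)"
    using rooted[OF refl assms] by blast
  obtain fr where frc: "\<forall>x\<in>V. fr x \<longleftrightarrow> (\<forall>c\<in>V. c \<noteq> r \<longrightarrow> par c = x \<longrightarrow> \<not> fr c)"
    using fr_exists[OF finV, of r dep par] pr by blast
  interpret rtree V E r dep par fr
    using g pr ed frc by unfold_locales auto
  have up: "indicated_domination_number V E \<le> independence_number V E" by (rule upper_final)
  have u0: "undom V E {} = V" by (simp add: undom_def dominated_empty)
  have "alphaU V E (undom V E {}) \<le> ind_game_val V E (card V) {}"
    using lower[OF g, of "{}" "card V"] u0 by simp
  moreover have "alphaU V E V = independence_number V E"
    unfolding alphaU_def independence_number_def independent_set_def by metis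
  ultimately have low: "independence_number V E \<le> indicated_domination_number V E"
    using u0 unfolding indicated_domination_number_def by simp
  show ?thesis using up low by simp
qed

end
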